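(* Let $\sigma=(V,\mathrm{atime},\mathrm{pos})$ be an instance of $k$-MPMD on an $H$-metric space $(\chi,d_H)$ with parameter $\gamma$. For every $k$-element set $F=\{v_1,\ldots,v_k\}\subseteq V$, letting $v\in F$ be a request with $\mathrm{atime}(v)=\max_{u\in F}\mathrm{atime}(u)$, $$\frac{1}{\gamma k^2}\sum_{i=1}^{k-1}\sum_{j=i+1}^{k}\mathrm{opt\text{-}cost}(v_i,v_j)\;\le\;\mathrm{opt\text{-}cost}(F)\;\le\;\sum_{i=1}^{k}\mathrm{opt\text{-}cost}(v,v_i),$$ where $\mathrm{opt\text{-}cost}(v,v):=0$.
   Context: $k\ge2$. An $H$-metric with parameter $\gamma$ (integer, $1\le\gamma\le k-1$) is a map $d_H:\chi^k\to[0,\infty)$ that is invariant under permutation of its arguments, is zero iff all arguments are equal, satisfies $d_H(p_1,\ldots,p_k)\le d_H(p_1,\ldots,p_i,a,\ldots,a)+d_H(a,\ldots,a,p_{i+1},\ldots,p_k)$ for all $p_j,a\in\chi$ and $i\in\{1,\dots,k\}$ (with $k-i$, resp. $i$, copies of $a$), and satisfies: $d_H(p)\le d_H(p')$ whenever the set of distinct entries of $p$ is a proper subset of that of $p'$, and $d_H(p)\le\gamma d_H(p')$ whenever these sets are equal. An instance of $k$-MPMD is $\sigma=(V,\mathrm{atime},\mathrm{pos})$ with $V=\{u_1,\ldots,u_m\}$ a set of requests ($m$ a multiple of $k$), arrival times $\mathrm{atime}:V\to\mathbb R_{\ge0}$ with $\mathrm{atime}(u_1)\le\cdots\le\mathrm{atime}(u_m)$,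 and positions $\mathrm{pos}:V\to\chi$. For a $k$-element $F=\{v_1,\ldots,v_k\}\subseteq V$, $\mathrm{opt\text{-}cost}(F):=d_H(\mathrm{pos}(v_1),\ldots,\mathrm{pos}(v_k))+\sum_{i=1}^k\big(\max_j\mathrm{atime}(v_j)-\mathrm{atime}(v_i)\big)$. The metric $d$ on $\chi$ is $d(p,q):=d_H(p,q,\ldots,q)+d_H(q,p,\ldots,p)$ (first argument once, second $k-1$ times). For distinct requests $u,w$, $\mathrm{opt\text{-}cost}(u,w):=d(\mathrm{pos}(u),\mathrm{pos}(w))+|\mathrm{atime}(u)-\mathrm{atime}(w)|$. *)

theory Defs
  imports Complex_Main "HOL-Library.Multiset"
begin

definition H_metric :: "nat \<Rightarrow> nat \<Rightarrow> ('p list \<Rightarrow> real) \<Rightarrow> bool" where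
  "H_metric k \<gamma> dH \<longleftrightarrow>
     1 \<le> \<gamma> \<and> \<gamma> \<le> k - 1 \<and>
     (\<forall>ps. length ps = k \<longrightarrow> 0 \<le> dH ps) \<and>
     (\<forall>ps qs. length ps = k \<longrightarrow> mset qs = mset ps \<longrightarrow> dH qs = dH ps) \<and>
     (\<forall>ps. length ps = k \<longrightarrow> (dH ps = 0 \<longleftrightarrow> (\<forall>x\<in>set ps. \<forall>y\<in>set ps. x = y))) \<and>
     (\<forall>ps a i. length ps = k \<longrightarrow> 1 \<le> i \<longrightarrow> i \<le> k \<longrightarrow>
        dH ps \<le> dH (take i ps @ replicate (k - i) a) + dH (replicate i a @ drop i ps)) \<and>
     (\<forall>ps qs. length ps = k \<longrightarrow> length qs = k \<longrightarrow> set ps \<subset> set qs \<longrightarrow> dH ps \<le> dH qs) \<and>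
     (\<forall>ps qs. length ps = k \<longrightarrow> length qs = k \<longrightarrow> set ps = set qs \<longrightarrow> dH ps \<le> real \<gamma> * dH qs)"

definition induced_metric :: "nat \<Rightarrow> ('p list \<Rightarrow> real) \<Rightarrow> 'p \<Rightarrow> 'p \<Rightarrow> real" where
  "induced_metric k dH p q = dH (p # replicate (k - 1) q) + dH (q # replicate (k - 1) p)"

definition MPMD_instance :: "nat \<Rightarrow> 'v set \<Rightarrow> ('v \<Rightarrow> real) \<Rightarrow> ('v \<Rightarrow> 'p) \<Rightarrow> bool" where
  "MPMD_instance k V atime pos \<longleftrightarrow> finite V \<and> k dvd card V \<and> (\<forall>u\<in>V. 0 \<le> atime u)"

definition opt_cost_set :: "('p list \<Rightarrow> real) \<Rightarrow> ('v \<Rightarrow> real) \<Rightarrow> ('v \<Rightarrow> 'p) \<Rightarrow> 'v list \<Rightarrow> real" where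
  "opt_cost_set dH atime pos vs =
     dH (map pos vs) + (\<Sum>i<length vs. Max (atime ` set vs) - atime (vs ! i))"

definition opt_cost_pair :: "nat \<Rightarrow> ('p list \<Rightarrow> real) \<Rightarrow> ('v \<Rightarrow> real) \<Rightarrow> ('v \<Rightarrow> 'p) \<Rightarrow> 'v \<Rightarrow> 'v \<Rightarrow> real" where
  "opt_cost_pair k dH atime pos u w =
     (if u = w then 0 else induced_metric k dH (pos u) (pos w) + \<bar>atime u - atime w\<bar>)"

end

theory Submission
  imports Defs
begin

lemma telescope:
  assumes H: "H_metric k \<gamma> dH" and len: "length ps = k" and k1: "1 \<le> k"
  shows "dH ps \<le> (\<Sum>l<k. dH (ps ! l # replicate (k - 1) a))"
proof -
  from H have perm: "\<And>ps qs. length ps = k \<Longrightarrow> mset qs = mset ps \<Longrightarrow> dH qs = dH ps"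
    and zero: "\<And>ps. length ps = k \<Longrightarrow> (dH ps = 0 \<longleftrightarrow> (\<forall>x\<in>set ps. \<forall>y\<in>set ps. x = y))"
    and tri: "\<And>ps a i. length ps = k \<Longrightarrow> 1 \<le> i \<Longrightarrow> i \<le> k \<Longrightarrow>
        dH ps \<le> dH (take i ps @ replicate (k - i) a) + dH (replicate i a @ drop i ps)"
    unfolding H_metric_def by blast+
  define f where "f j = dH (replicate j a @ drop j ps)" for j
  define g where "g l = dH (ps ! l # replicate (k - 1) a)" for l
  have stp: "f j \<le> g j + f (Suc j)" if "j < k" for j
  proof -
    define qs where "qs = ps ! j # (replicate j a @ drop (Suc j) ps)"
    have dj: "drop j ps = ps ! j # drop (Suc j) ps" using that len by (simp add: Cons_nth_drop_Suc)
    have lq: "length qs = k" using that len by (simp add: qs_def)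
    have "mset qs = mset (replicate j a @ drop j ps)" by (simp add: qs_def dj)
    hence "dH qs = f j" unfolding f_def using perm that len by simp
    moreover have "dH qs \<le> dH (take 1 qs @ replicate (k - 1) a) + dH (replicate 1 a @ drop 1 qs)"
      using tri[OF lq, of 1 a] k1 by simp
    moreover have "take 1 qs = [ps ! j]" by (simp add: qs_def)
    moreover have "replicate 1 a @ drop 1 qs = replicate (Suc j) a @ drop (Suc j) ps"
      by (simp add: qs_def)
    ultimately show ?thesis unfolding f_def g_def by simp
  qed
  have fk: "f k = 0" unfolding f_def using zero[of "replicate k a"] len by simp
  have main: "f j \<le> (\<Sum>l\<in>{j..<k}. g l)" if "j \<le> k" for j
    using that
  proof (induction j rule: inc_induct)
    case base
    then show ?case using fk by simp
  next
    case (step n)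
    have "(\<Sum>l\<in>{n..<k}. g l) = g n + (\<Sum>l\<in>{Suc n..<k}. g l)"
      using step.hyps by (simp add: sum.atLeast_Suc_lessThan)
    then show ?case using step.IH \<open>n < k\<close> \<open>n < k\<close> stp[of n] by simp
  qed
  show ?thesis using main[of 0] unfolding f_def g_def by (simp add: atLeast0LessThan)
qed

lemma pair_bound:
  assumes H: "H_metric k \<gamma> dH" and len: "length ps = k" and k2: "2 \<le> k"
    and x: "x \<in> set ps" and y: "y \<in> set ps"
  shows "dH (x # replicate (k - 1) y) \<le> real \<gamma> * dH ps"
proof -
  from H have g1: "1 \<le> \<gamma>"
    and nn: "\<And>ps. length ps = k \<Longrightarrow> 0 \<le> dH ps"
    and sub: "\<And>ps qs. length ps = k \<Longrightarrow> length qs = k \<Longrightarrow> set ps \<subset> set qs \<Longrightarrow> dH ps \<le> dH qs"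
    and eq: "\<And>ps qs. length ps = k \<Longrightarrow> length qs = k \<Longrightarrow> set ps = set qs \<Longrightarrow> dH ps \<le> real \<gamma> * dH qs"
    unfolding H_metric_def by blast+
  let ?q = "x # replicate (k - 1) y"
  have lq: "length ?q = k" using k2 by simp
  have sq: "set ?q \<subseteq> set ps" using x y by auto
  show ?thesis
  proof (cases "set ?q = set ps")
    case True then show ?thesis using eq[OF lq len] by simp
  next
    case False
    hence "dH ?q \<le> dH ps" using sub[OF lq len] sq by blast
    moreover have "dH ps \<le> real \<gamma> * dH ps" using mult_right_mono[of 1 "real \<gamma>" "dH ps"] g1 nn[OF len] by simp
    ultimately show ?thesis by linarith
  qed
qed

lemma count_pairs: "2 * (\<Sum>i<n. real (n - i)) = real n * (real n + 1)"
  proof (induction n)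
  case (Suc n)
  have "(\<Sum>i<Suc n. real (Suc n - i)) = (\<Sum>i<n. real (n - i)) + real (Suc n)"
    by (simp add: sum.lessThan_Suc Suc_diff_le sum.distrib)
  then show ?case using Suc.IH by (simp add: algebra_simps)
qed simp



theorem lemma1:
  fixes k \<gamma> :: nat and dH :: "'p list \<Rightarrow> real"
    and V :: "'v set" and atime :: "'v \<Rightarrow> real" and pos :: "'v \<Rightarrow> 'p"
    and vs :: "'v list" and v :: 'v
  assumes "2 \<le> k"
    and "H_metric k \<gamma> dH"
    and "MPMD_instance k V atime pos"
    and "distinct vs" and "length vs = k" and "set vs \<subseteq> V"
    and "v \<in> set vs" and "atime v = Max (atime ` set vs)"
  shows "(1 / (real \<gamma> * real k ^ 2)) *
           (\<Sum>i<k - 1. \<Sum>j\<in>{i+1..<k}. opt_cost_pair k dH atime pos (vs ! i) (vs ! j))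
         \<le> opt_cost_set dH atime pos vs
       \<and> opt_cost_set dH atime pos vs
         \<le> (\<Sum>i<k. opt_cost_pair k dH atime pos v (vs ! i))"
proof -
  note k2 = assms(1) and H = assms(2) and len = assms(5)
  from H have g1: "1 \<le> \<gamma>"
    and nn: "\<And>ps. length ps = k \<Longrightarrow> 0 \<le> dH ps"
    and zero: "\<And>ps. length ps = k \<Longrightarrow> (dH ps = 0 \<longleftrightarrow> (\<forall>x\<in>set ps. \<forall>y\<in>set ps. x = y))"
    unfolding H_metric_def by blast+
  define ps where "ps = map pos vs"
  define D where "D = dH ps"
  define T where "T = Max (atime ` set vs)"
  define S where "S = (\<Sum>i<k. T - atime (vs ! i))"
  have lps: "length ps = k" using len by (simp add: ps_def)
  have D0: "0 \<le> D" using nn[OF lps] by (simp add: D_def)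
  have oc: "opt_cost_set dH atime pos vs = D + S"
    unfolding opt_cost_set_def D_def S_def T_def ps_def using len by simp
  have Tge: "atime (vs ! i) \<le> T" if "i < k" for i
    unfolding T_def using that len by (intro Max_ge) auto
  have S0: "0 \<le> S" unfolding S_def using Tge by (intro sum_nonneg) auto
  have TS: "T - atime (vs ! i) \<le> S" if "i < k" for i
    unfolding S_def using Tge that
    by (intro member_le_sum[where f="\<lambda>i. T - atime (vs ! i)"]) auto
  have vT: "atime v = T" using assms(8) by (simp add: T_def)
  have trm: "dH (ps ! i # replicate (k - 1) (pos v)) + (T - atime (vs ! i))
      \<le> opt_cost_pair k dH atime pos v (vs ! i)" if "i < k" for i
  proof (cases "vs ! i = v")
    case True
    have "ps ! i # replicate (k - 1) (pos v) = replicate k (pos v)"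
      using that len True k2 by (simp add: ps_def replicate_Suc[symmetric])
    hence "dH (ps ! i # replicate (k - 1) (pos v)) = 0" using zero[of "replicate k (pos v)"] by simp
    then show ?thesis using True vT by (simp add: opt_cost_pair_def)
  next
    case False
    have pi: "ps ! i = pos (vs ! i)" using that len by (simp add: ps_def)
    have "0 \<le> dH (pos v # replicate (k - 1) (pos (vs ! i)))" using k2 by (intro nn) simp
    moreover have "\<bar>atime v - atime (vs ! i)\<bar> = T - atime (vs ! i)" using vT Tge[OF that] by simp
    ultimately show ?thesis using False pi
      by (simp add: opt_cost_pair_def induced_metric_def eq_commute[of v])
  qed
  have up: "opt_cost_set dH atime pos vs \<le> (\<Sum>i<k. opt_cost_pair k dH atime pos v (vs ! i))"
  proof -
    have "D \<le> (\<Sum>i<k. dH (ps ! i # replicate (k - 1) (pos v)))"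
      unfolding D_def using telescope[OF H lps] k2 by simp
    hence "D + S \<le> (\<Sum>i<k. dH (ps ! i # replicate (k - 1) (pos v)) + (T - atime (vs ! i)))"
      by (simp add: S_def sum.distrib)
    also have "\<dots> \<le> (\<Sum>i<k. opt_cost_pair k dH atime pos v (vs ! i))"
      by (intro sum_mono trm) simp
    finally show ?thesis using oc by simp
  qed
  define C where "C = 2 * real \<gamma> * (D + S)"
  have pb: "opt_cost_pair k dH atime pos (vs ! i) (vs ! j) \<le> C" if "i < k" "j < k" for i j
  proof -
    have xi: "pos (vs ! i) \<in> set ps" "pos (vs ! j) \<in> set ps"
      using that len by (auto simp: ps_def)
    have a: "induced_metric k dH (pos (vs ! i)) (pos (vs ! j)) \<le> 2 * real \<gamma> * D"
      unfolding induced_metric_def D_def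
      using pair_bound[OF H lps k2 xi(1) xi(2)] pair_bound[OF H lps k2 xi(2) xi(1)] by simp
    have b: "\<bar>atime (vs ! i) - atime (vs ! j)\<bar> \<le> S"
      using TS[OF that(1)] TS[OF that(2)] Tge[OF that(1)] Tge[OF that(2)] by linarith
    have "S \<le> 2 * real \<gamma> * S" using mult_right_mono[of 1 "2 * real \<gamma>" S] S0 g1 by simp
    have "0 \<le> C" unfolding C_def using D0 S0 by simp
    then show ?thesis using a b \<open>S \<le> 2 * real \<gamma> * S\<close>
      by (simp add: opt_cost_pair_def C_def algebra_simps)
  qed
  have C0: "0 \<le> C" unfolding C_def using D0 S0 by simp
  have "(\<Sum>i<k - 1. \<Sum>j\<in>{i+1..<k}. opt_cost_pair k dH atime pos (vs ! i) (vs ! j))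
        \<le> (\<Sum>i<k - 1. \<Sum>j\<in>{i+1..<k}. C)"
    by (intro sum_mono pb) auto
  also have "\<dots> = (\<Sum>i<k - 1. real (k - 1 - i)) * C"
    by (simp add: sum_distrib_right)
  also have "\<dots> = real (k - 1) * (real (k - 1) + 1) / 2 * C"
    using count_pairs[of "k - 1"] by simp
  also have "\<dots> = real (k - 1) * real k * real \<gamma> * (D + S)"
    using k2 by (simp add: C_def of_nat_diff)
  also have "\<dots> \<le> real k ^ 2 * real \<gamma> * (D + S)"
    using D0 S0 k2 by (intro mult_right_mono) (auto simp: power2_eq_square)
  finally have low0: "(\<Sum>i<k - 1. \<Sum>j\<in>{i+1..<k}. opt_cost_pair k dH atime pos (vs ! i) (vs ! j))
        \<le> real k ^ 2 * real \<gamma> * (D + S)" .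
  have pos': "0 < real \<gamma> * real k ^ 2" using g1 k2 by simp
  have low: "(1 / (real \<gamma> * real k ^ 2)) *
           (\<Sum>i<k - 1. \<Sum>j\<in>{i+1..<k}. opt_cost_pair k dH atime pos (vs ! i) (vs ! j)) \<le> D + S"
    using low0 pos' by (simp add: field_simps)
  show ?thesis using low up oc by simp
qed

end
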